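(* For $n\ge2$ and all $P,Q\in\Gamma_n$, $D_{T\Delta}(P\|Q)\le 3D_{TJ}(P\|Q)$.
   Context: $\Gamma_n=\{P=(p_1,\dots,p_n): p_i>0,\ \sum p_i=1\}$. $\Delta(P\|Q)=\sum_{i=1}^n\frac{(p_i-q_i)^2}{p_i+q_i}$; $J(P\|Q)=\sum_{i=1}^n(p_i-q_i)\ln\frac{p_i}{q_i}$; $T(P\|Q)=\sum_{i=1}^n\frac{p_i+q_i}{2}\ln\frac{p_i+q_i}{2\sqrt{p_iq_i}}$. $D_{T\Delta}=T-\frac14\Delta$, $D_{TJ}=T-\frac18J$. *)

theory Defs
  imports Complex_Main
begin

definition Gamma :: "nat \<Rightarrow> (nat \<Rightarrow> real) set" where
  "Gamma n = {p. (\<forall>i\<in>{1..n}. p i > 0) \<and> (\<Sum>i=1..n. p i) = 1}"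

definition Delta_div :: "nat \<Rightarrow> (nat \<Rightarrow> real) \<Rightarrow> (nat \<Rightarrow> real) \<Rightarrow> real" where
  "Delta_div n p q = (\<Sum>i=1..n. (p i - q i)^2 / (p i + q i))"

definition J_div :: "nat \<Rightarrow> (nat \<Rightarrow> real) \<Rightarrow> (nat \<Rightarrow> real) \<Rightarrow> real" where
  "J_div n p q = (\<Sum>i=1..n. (p i - q i) * ln (p i / q i))"

definition T_div :: "nat \<Rightarrow> (nat \<Rightarrow> real) \<Rightarrow> (nat \<Rightarrow> real) \<Rightarrow> real" where
  "T_div n p q = (\<Sum>i=1..n. (p i + q i) / 2 * ln ((p i + q i) / (2 * sqrt (p i * q i))))"

definition D_TDelta :: "nat \<Rightarrow> (nat \<Rightarrow> real) \<Rightarrow> (nat \<Rightarrow> real) \<Rightarrow> real" where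
  "D_TDelta n p q = T_div n p q - Delta_div n p q / 4"

definition D_TJ :: "nat \<Rightarrow> (nat \<Rightarrow> real) \<Rightarrow> (nat \<Rightarrow> real) \<Rightarrow> real" where
  "D_TJ n p q = T_div n p q - J_div n p q / 8"

end

theory Submission
  imports Defs
begin

definition VV :: "real \<Rightarrow> real" where
  "VV t = (t-1)*(t+1)/t + 8*(t-1)/(t+1) - 6*ln t"

definition UU :: "real \<Rightarrow> real" where
  "UU t = 8*ln(t+1) - 8*ln 2 - 4*ln t - 3*ln t*(t-1)/(t+1) + 2*((t-1)/(t+1))^2"

lemma VV_deriv:
  assumes "t > 0"
  shows "DERIV VV t :> (t-1)^4 / (t^2*(t+1)^2)"
proof -
  have "DERIV VV t :> ((1*(t+1) + (t-1)*1)*t - (t-1)*(t+1)*1)/t^2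
         + ((8*1)*(t+1) - 8*(t-1)*1)/(t+1)^2 - 6*(1/t)"
    unfolding VV_def using assms
    by (auto intro!: derivative_eq_intros simp: power2_eq_square)
  moreover have "((1*(t+1) + (t-1)*1)*t - (t-1)*(t+1)*1)/t^2
         + ((8*1)*(t+1) - 8*(t-1)*1)/(t+1)^2 - 6*(1/t) = (t-1)^4 / (t^2*(t+1)^2)"
    using assms by (simp add: field_simps) (simp add: power2_eq_square power4_eq_xxxx algebra_simps)
  ultimately show ?thesis by simp
qed

lemma UU_deriv:
  assumes "t > 0"
  shows "DERIV UU t :> VV t / (t+1)^2"
  unfolding UU_def VV_def using assms
  apply (intro derivative_eq_intros)
  apply (auto)
  using assms apply (simp add: field_simps add_pos_pos[of t 1] add_nonneg_eq_0_iff)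
  apply (simp add: power2_eq_square algebra_simps)
  done

lemma VV_1: "VV 1 = 0" by (simp add: VV_def)
lemma UU_1: "UU 1 = 0" by (simp add: UU_def)

lemma VV_ge: assumes "t \<ge> 1" shows "VV t \<ge> 0"
proof -
  have "VV 1 \<le> VV t"
  proof (rule DERIV_nonneg_imp_nondecreasing[OF assms])
    fix x assume "1 \<le> x" "x \<le> t"
    then show "\<exists>y. DERIV VV x :> y \<and> y \<ge> 0"
      using VV_deriv[of x] by (intro exI[of _ "(x-1)^4 / (x^2*(x+1)^2)"]) auto
  qed
  then show ?thesis by (simp add: VV_1)
qed

lemma VV_le: assumes "t > 0" "t \<le> 1" shows "VV t \<le> 0"
proof -
  have "VV t \<le> VV 1"
  proof (rule DERIV_nonneg_imp_nondecreasing[OF assms(2)])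
    fix x assume "t \<le> x" "x \<le> 1"
    then show "\<exists>y. DERIV VV x :> y \<and> y \<ge> 0"
      using VV_deriv[of x] assms by (intro exI[of _ "(x-1)^4 / (x^2*(x+1)^2)"]) auto
  qed
  then show ?thesis by (simp add: VV_1)
qed

lemma UU_ge: assumes "t > 0" shows "UU t \<ge> 0"
proof (cases "t \<ge> 1")
  case True
  have "UU 1 \<le> UU t"
  proof (rule DERIV_nonneg_imp_nondecreasing[OF True])
    fix x assume "1 \<le> x" "x \<le> t"
    then show "\<exists>y. DERIV UU x :> y \<and> y \<ge> 0"
      using UU_deriv[of x] VV_ge[of x] by (intro exI[of _ "VV x / (x+1)^2"]) auto
  qed
  then show ?thesis by (simp add: UU_1)
next
  case False
  have "UU 1 \<le> UU t"
  proof (rule DERIV_nonpos_imp_nonincreasing[of t 1 UU])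
    show "t \<le> 1" using False by simp
    fix x assume "t \<le> x" "x \<le> 1"
    then show "\<exists>y. DERIV UU x :> y \<and> y \<le> 0"
      using UU_deriv[of x] VV_le[of x] assms
      by (intro exI[of _ "VV x / (x+1)^2"]) (auto simp: divide_nonpos_pos)
  qed
  then show ?thesis by (simp add: UU_1)
qed

lemma pointwise:
  fixes a b :: real assumes a: "a > 0" and b: "b > 0"
  shows "(a+b)/2 * ln ((a+b)/(2*sqrt(a*b))) - (a-b)^2/(a+b)/4
     \<le> 3 * ((a+b)/2 * ln ((a+b)/(2*sqrt(a*b))) - (a-b)*ln(a/b)/8)"
proof -
  have ab: "a + b > 0" using a b by simp
  have l1: "ln ((a+b)/(2*sqrt(a*b))) = ln(a+b) - ln 2 - (ln a + ln b)/2"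
    using a b ab by (simp add: ln_div ln_mult ln_sqrt)
  have l2: "ln (a/b) = ln a - ln b" using a b by (simp add: ln_div)
  have l3: "ln (a/b + 1) = ln (a+b) - ln b"
  proof -
    have "a/b + 1 = (a+b)/b" using b by (simp add: field_simps)
    then show ?thesis using ab b by (simp add: ln_div)
  qed
  have u: "UU (a/b) \<ge> 0" using UU_ge a b by simp
  have e: "(a/b - 1)/(a/b + 1) = (a-b)/(a+b)"
  proof -
    have "a/b - 1 = (a-b)/b" "a/b + 1 = (a+b)/b" using b by (simp_all add: field_simps)
    then show ?thesis using b ab by simp
  qed
  have "3 * ((a+b)/2 * ln ((a+b)/(2*sqrt(a*b))) - (a-b)*ln(a/b)/8)
      - ((a+b)/2 * ln ((a+b)/(2*sqrt(a*b))) - (a-b)^2/(a+b)/4) = (a+b)/8 * UU (a/b)"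
  proof -
    have f1: "a/b - 1 = (a-b)/b" "a/b + 1 = (a+b)/b" using b by (simp_all add: field_simps)
    have uu: "UU (a/b) = 8*(ln(a+b) - ln b) - 8*ln 2 - 4*(ln a - ln b)
       - 3*(ln a - ln b)*(a-b)/(a+b) + 2*((a-b)/(a+b))^2"
      unfolding UU_def l2 l3[symmetric] e[symmetric] f1 using b ab by simp
    have ne: "a + b \<noteq> 0" using ab by simp
    define d where "d = (a-b)/(a+b)"
    have d1: "a - b = d*(a+b)" using ne unfolding d_def by simp
    have d2: "(a-b)^2/(a+b) = d^2*(a+b)" using ne unfolding d1 by (simp add: power2_eq_square)
    have d3: "3*(ln a - ln b)*(a-b)/(a+b) = 3*(ln a - ln b)*d" unfolding d_def by simp
    show ?thesis unfolding uu l1 l2 d2 d3 d_def[symmetric] unfolding d1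
      by (simp add: field_simps power2_eq_square)
  qed
  moreover have "(a+b)/8 * UU (a/b) \<ge> 0" using u ab by simp
  ultimately show ?thesis by linarith
qed

theorem proposition5p6:
  fixes n :: nat and P Q :: "nat \<Rightarrow> real"
  assumes "n \<ge> 2" and "P \<in> Gamma n" and "Q \<in> Gamma n"
  shows "D_TDelta n P Q \<le> 3 * D_TJ n P Q"
proof -
  have pos: "\<And>i. i \<in> {1..n} \<Longrightarrow> P i > 0 \<and> Q i > 0"
    using assms(2,3) unfolding Gamma_def by auto
  have "D_TDelta n P Q = (\<Sum>i=1..n. (P i + Q i)/2 * ln ((P i + Q i)/(2*sqrt(P i * Q i)))
        - (P i - Q i)^2/(P i + Q i)/4)"
    unfolding D_TDelta_def T_div_def Delta_div_def
    by (simp add: sum_subtractf sum_divide_distrib)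
  also have "\<dots> \<le> (\<Sum>i=1..n. 3 * ((P i + Q i)/2 * ln ((P i + Q i)/(2*sqrt(P i * Q i)))
        - (P i - Q i) * ln (P i / Q i)/8))"
    by (rule sum_mono) (use pos pointwise in blast)
  also have "\<dots> = 3 * D_TJ n P Q"
    unfolding D_TJ_def T_div_def J_div_def
    by (simp add: sum_subtractf sum_divide_distrib sum_distrib_left)
  finally show ?thesis .
qed

end
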